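(* For $|q|<1$ and every nonzero complex number $a$, \[ \sum_{i,j,k\geq 0} \frac{q^{i^2+j^2+k^2+i(j+k)}}{(q;q)_i(q;q)_j(q;q)_k} a^{j-k}=\frac{(-aq,-q/a,q^2;q^2)_\infty}{(q;q)_\infty}. \]
   Context: For $|q|<1$: $(a;q)_n=\prod_{k=0}^{n-1}(1-aq^k)$ ($(a;q)_0=1$), $(a;q)_\infty=\prod_{k\ge0}(1-aq^k)$, $(a_1,\dots,a_m;q)_\infty=\prod_\ell(a_\ell;q)_\infty$. *)

theory Defs
  imports "HOL-Analysis.Analysis"
begin

definition qpoch :: "complex \<Rightarrow> complex \<Rightarrow> nat \<Rightarrow> complex" where
  "qpoch a q n = (\<Prod>k<n. 1 - a * q ^ k)"

definition qpoch_inf :: "complex \<Rightarrow> complex \<Rightarrow> complex" where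
  "qpoch_inf a q = (\<Prod>k. 1 - a * q ^ k)"

end

theory Submission
  imports Defs "HOL-Library.Nat_Bijection"
begin

lemma qpoch_0[simp]: "qpoch x b 0 = 1" by (simp add: qpoch_def)

lemma qpoch_Suc: "qpoch x b (Suc n) = qpoch x b n * (1 - x * b ^ n)"
  by (simp add: qpoch_def)

lemma qpoch_add: "qpoch x b (n + k) = qpoch x b n * qpoch (x * b ^ n) b k"
  by (induction k) (simp_all add: qpoch_Suc power_add mult.assoc mult.left_commute)

lemma qpoch_Suc': "qpoch x b (Suc n) = (1 - x) * qpoch (x * b) b n"
  using qpoch_add[of x b 1 n] by (simp add: qpoch_def)

lemma qpoch_nz:
  assumes "norm b < 1"
  shows "qpoch b b n \<noteq> 0"
proof -
  have "b * b ^ k \<noteq> 1" for k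
  proof
    assume "b * b ^ k = 1"
    hence "norm b ^ Suc k = 1" by (metis norm_one norm_power power_Suc)
    moreover have "norm b ^ Suc k < 1" using assms by (subst power_less_one_iff) auto
    ultimately show False by simp
  qed
  thus ?thesis unfolding qpoch_def by (simp add: prod_zero_iff)
qed

lemma one_minus_ge_exp:
  fixes t r :: real
  assumes "0 \<le> t" "t \<le> r" "r < 1"
  shows "exp (- t / (1 - r)) \<le> 1 - t"
proof -
  have "1 + t / (1 - t) \<le> exp (t / (1 - t))" by (rule exp_ge_add_one_self)
  moreover have "1 + t / (1 - t) = 1 / (1 - t)" using assms by (simp add: field_simps)
  ultimately have "1 / (1 - t) \<le> exp (t / (1 - t))" by simp
  hence "exp (- (t / (1 - t))) \<le> 1 - t"
    using assms by (simp add: exp_minus field_simps)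
  moreover have "- t / (1 - r) \<le> - (t / (1 - t))"
    using assms by (simp add: frac_le)
  ultimately show ?thesis by (meson exp_le_cancel_iff order_trans)
qed

lemma qpoch_lower:
  assumes "norm b < 1"
  shows "norm (qpoch b b n) \<ge> exp (- (norm b / (1 - norm b)) / (1 - norm b))"
proof -
  define r where "r = norm b"
  have r: "0 \<le> r" "r < 1" using assms by (auto simp: r_def)
  have "exp (- (\<Sum>k<n. r ^ Suc k) / (1 - r)) \<le> (\<Prod>k<n. 1 - r ^ Suc k)" for n
  proof (induction n)
    case 0 then show ?case by simp
  next
    case (Suc n)
    have e: "exp (- (\<Sum>k<Suc n. r ^ Suc k) / (1 - r)) =
          exp (- (\<Sum>k<n. r ^ Suc k) / (1 - r)) * exp (- (r ^ Suc n) / (1 - r))"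
    proof -
      have "1 - r \<noteq> 0" using r by simp
      thus ?thesis by (simp add: exp_add[symmetric] diff_divide_distrib)
    qed
    have "r ^ Suc n \<le> r" using r by (simp add: mult_left_le power_le_one)
    hence "exp (- (r ^ Suc n) / (1 - r)) \<le> 1 - r ^ Suc n"
      using r by (intro one_minus_ge_exp) auto
    then show ?case unfolding e prod.lessThan_Suc
      by (intro mult_mono'[OF Suc.IH]) auto
  qed
  moreover have "(\<Sum>k<n. r ^ Suc k) \<le> r / (1 - r)"
  proof -
    have "(\<Sum>k<n. r ^ Suc k) = r * (\<Sum>k<n. r ^ k)" by (simp add: sum_distrib_left)
    also have "(\<Sum>k<n. r ^ k) \<le> 1 / (1 - r)"
      using r sum_le_suminf[of "\<lambda>k. r ^ k" "{..<n}"] suminf_geometric[of r]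
      by (simp add: summable_geometric)
    hence "r * (\<Sum>k<n. r ^ k) \<le> r * (1 / (1 - r))" using r by (intro mult_left_mono) auto
    finally show ?thesis by simp
  qed
  hence "(\<Sum>k<n. r ^ Suc k) / (1 - r) \<le> (r / (1 - r)) / (1 - r)"
    using r by (intro divide_right_mono) auto
  hence "exp (- (r / (1 - r)) / (1 - r)) \<le> exp (- (\<Sum>k<n. r ^ Suc k) / (1 - r))"
    by (simp only: exp_le_cancel_iff minus_divide_left neg_le_iff_le)
  moreover have "(\<Prod>k<n. 1 - r ^ Suc k) \<le> norm (qpoch b b n)"
  proof -
    have "(\<Prod>k<n. 1 - r ^ Suc k) \<le> (\<Prod>k<n. norm (1 - b * b ^ k))"
    proof (rule prod_mono)
      fix k assume "k \<in> {..<n}"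
      have "norm (1::complex) - norm (b * b ^ k) \<le> norm (1 - b * b ^ k)" by (rule norm_triangle_ineq2)
      moreover have "r ^ Suc k \<le> 1" using r power_le_one[of r "Suc k"] by simp
      ultimately show "0 \<le> 1 - r ^ Suc k \<and> 1 - r ^ Suc k \<le> norm (1 - b * b ^ k)"
        by (simp add: r_def norm_mult norm_power)
    qed
    thus ?thesis by (simp add: qpoch_def prod_norm)
  qed
  ultimately show ?thesis unfolding r_def by (meson order_trans)
qed

lemma qpoch_upper:
  assumes "norm b < 1"
  shows "norm (qpoch x b n) \<le> exp (norm x / (1 - norm b))"
proof -
  define r where "r = norm b"
  have r: "0 \<le> r" "r < 1" using assms by (auto simp: r_def)
  have "norm (qpoch x b n) = (\<Prod>k<n. norm (1 - x * b ^ k))" by (simp add: qpoch_def prod_norm)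
  also have "\<dots> \<le> (\<Prod>k<n. exp (norm x * r ^ k))"
  proof (rule prod_mono)
    fix k assume "k \<in> {..<n}"
    have "norm (1 - x * b ^ k) \<le> norm (1::complex) + norm (x * b ^ k)" by (rule norm_triangle_ineq4)
    also have "\<dots> = 1 + norm x * r ^ k" by (simp add: r_def norm_mult norm_power)
    also have "\<dots> \<le> exp (norm x * r ^ k)" by (rule exp_ge_add_one_self)
    finally show "0 \<le> norm (1 - x * b ^ k) \<and> norm (1 - x * b ^ k) \<le> exp (norm x * r ^ k)" by simp
  qed
  also have "\<dots> = exp (norm x * (\<Sum>k<n. r ^ k))" by (simp add: exp_sum sum_distrib_left)
  also have "\<dots> \<le> exp (norm x / (1 - r))"
  proof -
    have "(\<Sum>k<n. r ^ k) \<le> 1 / (1 - r)"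
      using r sum_le_suminf[of "\<lambda>k. r ^ k" "{..<n}"] suminf_geometric[of r]
      by (simp add: summable_geometric)
    hence "norm x * (\<Sum>k<n. r ^ k) \<le> norm x * (1 / (1 - r))" by (intro mult_left_mono) auto
    thus ?thesis by simp
  qed
  finally show ?thesis by (simp add: r_def)
qed

lemma qpoch_tendsto:
  assumes "norm b < 1"
  shows "(\<lambda>n. qpoch x b n) \<longlonglongrightarrow> qpoch_inf x b"
proof -
  have "summable (\<lambda>k. norm ((1 - x * b ^ k) - 1))"
    using assms by (simp add: norm_mult norm_power summable_geometric)
  hence "abs_convergent_prod (\<lambda>k. 1 - x * b ^ k)" by (rule summable_imp_abs_convergent_prod)
  hence "convergent_prod (\<lambda>k. 1 - x * b ^ k)" by (rule abs_convergent_prod_imp_convergent_prod)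
  hence "(\<lambda>n. \<Prod>k\<le>n. 1 - x * b ^ k) \<longlonglongrightarrow> qpoch_inf x b"
    unfolding qpoch_inf_def by (rule convergent_prod_LIMSEQ)
  hence "(\<lambda>n. \<Prod>k<n. 1 - x * b ^ k) \<longlonglongrightarrow> qpoch_inf x b"
    using LIMSEQ_lessThan_iff_atMost[of "\<lambda>A. \<Prod>k\<in>A. 1 - x * b ^ k"] by simp
  thus ?thesis by (simp add: qpoch_def)
qed

definition qc :: "complex \<Rightarrow> real" where
  "qc b = exp (- (norm b / (1 - norm b)) / (1 - norm b))"

lemma qc_pos: "qc b > 0" by (simp add: qc_def)

lemma qpoch_lower': "norm b < 1 \<Longrightarrow> qc b \<le> norm (qpoch b b n)"
  unfolding qc_def by (rule qpoch_lower)

lemma qpoch_inf_lower: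
  assumes "norm b < 1"
  shows "qc b \<le> norm (qpoch_inf b b)"
proof (rule tendsto_lowerbound)
  show "(\<lambda>n. norm (qpoch b b n)) \<longlonglongrightarrow> norm (qpoch_inf b b)"
    by (intro tendsto_norm qpoch_tendsto assms)
  show "\<forall>\<^sub>F n in sequentially. qc b \<le> norm (qpoch b b n)"
    using qpoch_lower'[OF assms] by simp
qed simp

lemma qpoch_inf_nz: "norm b < 1 \<Longrightarrow> qpoch_inf b b \<noteq> 0"
  using qpoch_inf_lower[of b] qc_pos[of b] by auto

fun qbin :: "complex \<Rightarrow> nat \<Rightarrow> nat \<Rightarrow> complex" where
  "qbin b 0 k = (if k = 0 then 1 else 0)"
| "qbin b (Suc n) 0 = 1"
| "qbin b (Suc n) (Suc k) = b ^ Suc k * qbin b n (Suc k) + qbin b n k"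

lemma qbin_0_right[simp]: "qbin b n 0 = 1"
  by (cases n) auto

lemma qbin_above: "n < k \<Longrightarrow> qbin b n k = 0"
proof (induction n arbitrary: k)
  case 0 then show ?case by simp
next
  case (Suc n)
  then obtain k' where "k = Suc k'" by (cases k) auto
  with Suc show ?case by simp
qed

lemma qbin_prod:
  "k \<le> n \<Longrightarrow> qbin b n k * qpoch b b k * qpoch b b (n - k) = qpoch b b n"
proof (induction n arbitrary: k)
  case 0 then show ?case by simp
next
  case (Suc n)
  show ?case
  proof (cases k)
    case 0 then show ?thesis by simp
  next
    case (Suc k')
    have kn: "k' \<le> n" using Suc.prems Suc by simp
    have t2: "qbin b n k' * qpoch b b (Suc k') * qpoch b b (n - k') = qpoch b b n * (1 - b ^ Suc k')"
      using Suc.IH[OF kn] by (simp add: qpoch_Suc algebra_simps)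
    have t1: "b ^ Suc k' * qbin b n (Suc k') * qpoch b b (Suc k') * qpoch b b (n - k')
              = qpoch b b n * (b ^ Suc k' - b ^ Suc n)"
    proof (cases "k' = n")
      case True then show ?thesis by (simp add: qbin_above)
    next
      case False
      hence kn': "Suc k' \<le> n" using kn by simp
      have nk: "n - k' = Suc (n - Suc k')" using kn' by simp
      have pw: "b ^ Suc k' * b ^ (n - k') = b ^ Suc n"
        using kn by (simp add: power_add[symmetric])
      have "b ^ Suc k' * qbin b n (Suc k') * qpoch b b (Suc k') * qpoch b b (n - k')
          = b ^ Suc k' * (qbin b n (Suc k') * qpoch b b (Suc k') * qpoch b b (n - Suc k')) * (1 - b * b ^ (n - Suc k'))"
        unfolding nk qpoch_Suc by (simp add: algebra_simps)
      also have "\<dots> = qpoch b b n * (b ^ Suc k' - b ^ Suc k' * b ^ (n - k'))"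
        using Suc.IH[OF kn'] nk by (simp add: algebra_simps)
      finally show ?thesis using pw by simp
    qed
    have "qbin b (Suc n) k * qpoch b b k * qpoch b b (Suc n - k)
        = b ^ Suc k' * qbin b n (Suc k') * qpoch b b (Suc k') * qpoch b b (n - k')
          + qbin b n k' * qpoch b b (Suc k') * qpoch b b (n - k')"
      using Suc by (simp add: algebra_simps)
    also have "\<dots> = qpoch b b n * (1 - b ^ Suc n)" unfolding t1 t2 by (simp add: algebra_simps)
    also have "\<dots> = qpoch b b (Suc n)" by (simp add: qpoch_Suc)
    finally show ?thesis .
  qed
qed

lemma qbin_eq:
  assumes "norm b < 1" "k \<le> n"
  shows "qbin b n k = qpoch b b n / (qpoch b b k * qpoch b b (n - k))"
  using qbin_prod[OF assms(2), of b] qpoch_nz[OF assms(1)]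
  by (simp add: field_simps)

lemma rothe:
  fixes q x :: complex
  shows "(\<Prod>j<n. 1 + x * (q\<^sup>2) ^ j) = (\<Sum>k\<le>n. q ^ (k * (k - 1)) * qbin (q\<^sup>2) n k * x ^ k)"
proof (induction n arbitrary: x)
  case 0 then show ?case by simp
next
  case (Suc n)
  define Q where "Q = q\<^sup>2"
  define c where "c k = q ^ (k * (k - 1))" for k
  define g where "g k = c k * qbin Q n k * (x * Q) ^ k" for k
  have ex: "c (Suc k) = c k * Q ^ k" for k
  proof -
    have "Suc k * (Suc k - 1) = k * (k - 1) + 2 * k" by (cases k) auto
    hence "c (Suc k) = q ^ (k * (k - 1) + 2 * k)" by (simp only: c_def)
    also have "\<dots> = c k * Q ^ k" by (simp only: power_add power_mult Q_def c_def)
    finally show ?thesis .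
  qed
  have "(\<Prod>j<Suc n. 1 + x * Q ^ j) = (1 + x) * (\<Prod>j<n. 1 + (x * Q) * Q ^ j)"
    by (subst prod.lessThan_Suc_shift) (simp add: mult.assoc)
  also have "(\<Prod>j<n. 1 + (x * Q) * Q ^ j) = (\<Sum>k\<le>n. g k)"
    using Suc.IH[of "x * Q"] by (simp add: g_def Q_def c_def)
  finally have L: "(\<Prod>j<Suc n. 1 + x * Q ^ j) = (1 + x) * (\<Sum>k\<le>n. g k)" .
  have "(\<Sum>k\<le>Suc n. q ^ (k * (k - 1)) * qbin Q (Suc n) k * x ^ k)
       = (\<Sum>k\<le>Suc n. c k * qbin Q (Suc n) k * x ^ k)" by (simp add: c_def)
  also have "\<dots> = 1 + (\<Sum>k\<le>n. c (Suc k) * (Q ^ Suc k * qbin Q n (Suc k) + qbin Q n k) * x ^ Suc k)"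
    by (subst sum.atMost_Suc_shift) (simp add: c_def)
  also have "\<dots> = 1 + (\<Sum>k\<le>n. g (Suc k) + x * g k)"
  proof -
    have "c (Suc k) * (Q ^ Suc k * qbin Q n (Suc k) + qbin Q n k) * x ^ Suc k
          = g (Suc k) + x * g k" for k
      unfolding g_def ex by (simp add: power_mult_distrib algebra_simps)
    thus ?thesis by simp
  qed
  also have "\<dots> = 1 + (\<Sum>k\<le>n. g (Suc k)) + x * (\<Sum>k\<le>n. g k)"
    by (simp add: sum.distrib sum_distrib_left)
  also have "1 + (\<Sum>k\<le>n. g (Suc k)) = (\<Sum>k\<le>n. g k)"
  proof -
    have "(\<Sum>k\<le>Suc n. g k) = g 0 + (\<Sum>k\<le>n. g (Suc k))" by (rule sum.atMost_Suc_shift)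
    moreover have "(\<Sum>k\<le>Suc n. g k) = (\<Sum>k\<le>n. g k)" by (simp add: g_def qbin_above)
    ultimately show ?thesis by (simp add: g_def c_def)
  qed
  finally show ?case unfolding L Q_def[symmetric] by (simp add: algebra_simps)
qed

definition Tsum :: "complex \<Rightarrow> nat \<Rightarrow> nat \<Rightarrow> complex" where
  "Tsum q s p = (\<Sum>m\<le>s. q ^ (m * (m + p)) * qbin q s m * qpoch (q ^ (m + p + 1)) q (s - m))"

lemma Tsum_1: "Tsum q s p = 1"
proof (induction s arbitrary: p)
  case 0 then show ?case by (simp add: Tsum_def)
next
  case (Suc s)
  define R where "R a n = qpoch (q ^ a) q n" for a n
  have RS: "R a (Suc n) = (1 - q ^ a) * R (Suc a) n" for a n
    by (simp add: R_def qpoch_Suc' mult.commute)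
  define f where "f m = q ^ (m * (m + p)) * qbin q (Suc s) m * R (m + p + 1) (Suc s - m)" for m
  define h where "h m = q ^ (m * (m + p)) * q ^ m * qbin q s m * R (m + p + 1) (Suc s - m)" for m
  define A where "A m = q ^ (Suc m * (Suc m + p)) * q ^ Suc m * qbin q s (Suc m) * R (m + p + 2) (s - m)" for m
  define B where "B m = q ^ (Suc m * (Suc m + p)) * qbin q s m * R (m + p + 2) (s - m)" for m
  define g where "g m = q ^ (m * (m + Suc p)) * qbin q s m * R (m + Suc p + 1) (s - m)" for m
  have fS: "f (Suc m) = A m + B m" for m
    by (simp add: f_def A_def B_def algebra_simps)
  have h0: "h 0 = f 0" by (simp add: h_def f_def)
  have hS: "h (Suc m) = A m" for m
    by (simp add: h_def A_def algebra_simps)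
  have hg: "h m = g m - B m" if "m \<le> s" for m
  proof -
    have "Suc s - m = Suc (s - m)" using that by simp
    hence e1: "R (m + p + 1) (Suc s - m) = (1 - q ^ (m + p + 1)) * R (m + p + 2) (s - m)"
      using RS by simp
    have e2: "q ^ (m * (m + p)) * q ^ m = q ^ (m * (m + Suc p))"
      by (simp add: power_add[symmetric] algebra_simps)
    have e3: "q ^ (m * (m + Suc p)) * q ^ (m + p + 1) = q ^ (Suc m * (Suc m + p))"
      by (simp add: power_add[symmetric] algebra_simps)
    have e4: "R (m + Suc p + 1) (s - m) = R (m + p + 2) (s - m)" by simp
    have "h m = q ^ (m * (m + Suc p)) * qbin q s m * R (m + p + 2) (s - m)
         - (q ^ (m * (m + Suc p)) * q ^ (m + p + 1)) * qbin q s m * R (m + p + 2) (s - m)"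
      unfolding h_def e2 e1 by (simp add: algebra_simps)
    also have "\<dots> = g m - B m" by (simp only: g_def B_def e3 e4)
    finally show ?thesis .
  qed
  have "Tsum q (Suc s) p = f 0 + (\<Sum>m\<le>s. f (Suc m))"
    unfolding Tsum_def f_def R_def by (rule sum.atMost_Suc_shift)
  also have "\<dots> = (h 0 + (\<Sum>m\<le>s. h (Suc m))) + (\<Sum>m\<le>s. B m)"
    by (simp add: fS hS h0 sum.distrib)
  also have "h 0 + (\<Sum>m\<le>s. h (Suc m)) = (\<Sum>m\<le>Suc s. h m)"
    by (rule sum.atMost_Suc_shift[symmetric])
  also have "\<dots> = (\<Sum>m\<le>s. h m)" by (simp add: h_def qbin_above)
  also have "\<dots> = (\<Sum>m\<le>s. g m - B m)" by (rule sum.cong) (auto simp: hg)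
  also have "\<dots> + (\<Sum>m\<le>s. B m) = (\<Sum>m\<le>s. g m)" by (simp add: sum_subtractf)
  also have "\<dots> = Tsum q s (Suc p)" by (simp add: g_def R_def Tsum_def)
  finally show ?case using Suc.IH by simp
qed

lemma identA:
  assumes "norm q < 1"
  shows "(\<Sum>m\<le>s. q ^ (m * (m + p)) / (qpoch q q (s - m) * qpoch q q m * qpoch q q (m + p)))
       = 1 / (qpoch q q s * qpoch q q (s + p))"
proof -
  note nz = qpoch_nz[OF assms]
  have "(\<Sum>m\<le>s. q ^ (m * (m + p)) / (qpoch q q (s - m) * qpoch q q m * qpoch q q (m + p)))
      = (\<Sum>m\<le>s. q ^ (m * (m + p)) * qbin q s m * qpoch (q ^ (m + p + 1)) q (s - m))
        / (qpoch q q s * qpoch q q (s + p))"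
    unfolding sum_divide_distrib
  proof (rule sum.cong)
    fix m assume "m \<in> {..s}"
    hence ms: "m \<le> s" by simp
    have e1: "qbin q s m = qpoch q q s / (qpoch q q m * qpoch q q (s - m))"
      by (rule qbin_eq[OF assms ms])
    have "qpoch q q (m + p + (s - m)) = qpoch q q (m + p) * qpoch (q * q ^ (m + p)) q (s - m)"
      by (rule qpoch_add)
    moreover have "m + p + (s - m) = s + p" using ms by simp
    ultimately have e2: "qpoch (q ^ (m + p + 1)) q (s - m) = qpoch q q (s + p) / qpoch q q (m + p)"
      using nz[of "m + p"] by (simp add: field_simps)
    show "q ^ (m * (m + p)) / (qpoch q q (s - m) * qpoch q q m * qpoch q q (m + p))
        = q ^ (m * (m + p)) * qbin q s m * qpoch (q ^ (m + p + 1)) q (s - m)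
          / (qpoch q q s * qpoch q q (s + p))"
      unfolding e1 e2 using nz by (simp add: field_simps)
  qed simp
  also have "\<dots> = 1 / (qpoch q q s * qpoch q q (s + p))"
    using Tsum_1[of q s p] by (simp add: Tsum_def)
  finally show ?thesis .
qed

lemma qpoch_tendsto_minus:
  assumes "norm b < 1"
  shows "(\<lambda>s. qpoch x b (s - m)) \<longlonglongrightarrow> qpoch_inf x b"
  using filterlim_compose[OF qpoch_tendsto[OF assms] filterlim_minus_const_nat_at_top] .

lemma qpoch_tendsto_plus:
  assumes "norm b < 1"
  shows "(\<lambda>s. qpoch x b (s + m)) \<longlonglongrightarrow> qpoch_inf x b"
  using filterlim_compose[OF qpoch_tendsto[OF assms] filterlim_add_const_nat_at_top] .

lemma summable_pow_sq:
  fixes r :: real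
  assumes "0 \<le> r" "r < 1"
  shows "summable (\<lambda>m. r ^ (m * m))"
proof (rule summable_comparison_test[OF _ summable_geometric[of r]])
  show "\<exists>N. \<forall>n\<ge>N. norm (r ^ (n * n)) \<le> r ^ n"
  proof (intro exI allI impI)
    fix n :: nat
    have "n \<le> n * n" by (cases n) auto
    hence "r ^ (n * n) \<le> r ^ n" using assms by (intro power_decreasing) auto
    thus "norm (r ^ (n * n)) \<le> r ^ n" using assms by simp
  qed
qed (use assms in simp)

lemma durfee:
  assumes q: "norm q < 1"
  shows "((\<lambda>m. q ^ (m * (m + p)) / (qpoch q q m * qpoch q q (m + p))) has_sum (1 / qpoch_inf q q)) UNIV"
proof -
  define L where "L = qpoch_inf q q"
  define P where "P n = qpoch q q n" for n
  define c where "c = qc q"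
  define r where "r = norm q"
  have r: "0 \<le> r" "r < 1" using q by (auto simp: r_def)
  have c: "c > 0" by (simp add: c_def qc_pos)
  have Pc: "c \<le> norm (P n)" for n unfolding P_def c_def by (rule qpoch_lower'[OF q])
  have Pnz: "P n \<noteq> 0" for n unfolding P_def by (rule qpoch_nz[OF q])
  have Lnz: "L \<noteq> 0" unfolding L_def by (rule qpoch_inf_nz[OF q])
  define a where "a m s = (if m \<in> {..s} then q ^ (m * (m + p)) / (P (s - m) * P m * P (m + p)) else 0)" for m s
  define b where "b m = q ^ (m * (m + p)) / (L * P m * P (m + p))" for m
  define M where "M m = r ^ (m * m) / c ^ 3" for m
  have lim: "(\<lambda>s. a m s) \<longlonglongrightarrow> b m" for m
  proof -
    have "(\<lambda>s. q ^ (m * (m + p)) / (P (s - m) * P m * P (m + p))) \<longlonglongrightarrow> q ^ (m * (m + p)) / (L * P m * P (m + p))"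
      unfolding P_def L_def
      by (intro tendsto_intros qpoch_tendsto_minus q) (use Lnz Pnz in \<open>simp_all add: L_def P_def\<close>)
    moreover have "eventually (\<lambda>s. q ^ (m * (m + p)) / (P (s - m) * P m * P (m + p)) = a m s) sequentially"
      using eventually_ge_at_top[of m] by eventually_elim (simp add: a_def)
    ultimately show ?thesis unfolding b_def by (rule Lim_transform_eventually)
  qed
  have bound: "norm (a m s) \<le> M m" for m s
  proof (cases "m \<le> s")
    case True
    have "norm (q ^ (m * (m + p))) \<le> r ^ (m * m)"
      unfolding norm_power r_def using r by (intro power_decreasing) (auto simp: r_def)
    moreover have "c ^ 3 \<le> norm (P (s - m) * P m * P (m + p))"
    proof -
      have "c * c * c \<le> norm (P (s - m)) * norm (P m) * norm (P (m + p))"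
        using Pc c by (intro mult_mono) (auto intro: mult_nonneg_nonneg)
      thus ?thesis by (simp add: norm_mult power3_eq_cube)
    qed
    ultimately have "norm (q ^ (m * (m + p))) / norm (P (s - m) * P m * P (m + p)) \<le> r ^ (m * m) / c ^ 3"
      using c r by (intro frac_le) auto
    thus ?thesis using True by (simp add: a_def M_def norm_divide)
  next
    case False thus ?thesis using c r by (simp add: a_def M_def)
  qed
  have sM: "summable M" unfolding M_def using summable_pow_sq[OF r] by (intro summable_divide)
  have T: "eventually (\<lambda>n. summable (\<lambda>k. norm (a k n))) sequentially \<and>
           summable (\<lambda>n. norm (b n)) \<and> ((\<lambda>n. suminf (\<lambda>k. a k n)) \<longlonglongrightarrow> suminf b)"
    by (rule tannerys_theorem[OF lim _ sM]) (auto simp: bound intro!: always_eventually)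
  have "(\<lambda>s. suminf (\<lambda>m. a m s)) = (\<lambda>s. 1 / (P s * P (s + p)))"
  proof
    fix s
    have "(\<lambda>m. a m s) sums (\<Sum>m\<in>{..s}. q ^ (m * (m + p)) / (P (s - m) * P m * P (m + p)))"
      unfolding a_def by (rule sums_If_finite_set) simp
    thus "suminf (\<lambda>m. a m s) = 1 / (P s * P (s + p))"
      using identA[OF q, where s=s and p=p] unfolding P_def by (simp add: sums_iff)
  qed
  moreover have "(\<lambda>s. 1 / (P s * P (s + p))) \<longlonglongrightarrow> 1 / (L * L)"
    unfolding P_def L_def
    by (intro tendsto_intros qpoch_tendsto_plus qpoch_tendsto q) (use Lnz in \<open>simp add: L_def\<close>)
  ultimately have sb: "suminf b = 1 / (L * L)" using T LIMSEQ_unique by metis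
  have sumb: "summable (\<lambda>n. norm (b n))" using T by blast
  hence "summable b" by (rule summable_norm_cancel)
  hence "(\<lambda>m. L * b m) sums (L * (1 / (L * L)))" using sb by (metis summable_sums sums_mult)
  moreover have "(\<lambda>m. L * b m) = (\<lambda>m. q ^ (m * (m + p)) / (qpoch q q m * qpoch q q (m + p)))"
    using Lnz by (auto simp: b_def P_def)
  ultimately have S: "(\<lambda>m. q ^ (m * (m + p)) / (qpoch q q m * qpoch q q (m + p))) sums (1 / L)"
    using Lnz by simp
  have "summable (\<lambda>m. norm (L * b m))"
    using summable_mult[OF sumb, of "norm L"] by (simp add: norm_mult)
  hence "summable (\<lambda>m. norm (q ^ (m * (m + p)) / (qpoch q q m * qpoch q q (m + p))))"
    using Lnz by (simp add: b_def P_def)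
  from norm_summable_imp_has_sum[OF this S] show ?thesis by (simp add: L_def)
qed

lemma prod_lessThan_add: "(\<Prod>j<N + (M::nat). f j) = (\<Prod>j<N. f j) * (\<Prod>i<M. f (N + i))"
  by (induction M) (simp_all add: mult.assoc)

lemma pi_add: "(x::complex) \<noteq> 0 \<Longrightarrow> x powi a * x powi b = x powi (a + b)"
  by (simp add: power_int_add)

lemma pi_add': "(x::complex) \<noteq> 0 \<Longrightarrow> a + b = c \<Longrightarrow> x powi a * x powi b = x powi c"
  by (metis power_int_add)

lemma pi_nat: "(x::complex) ^ n = x powi (int n)" by simp

lemma pi_inv: "inverse (x::complex) ^ n = x powi (- int n)"
  by (simp add: power_int_minus power_inverse)

lemma prod_u:
  fixes q z :: complex
  assumes "z \<noteq> 0" "q \<noteq> 0"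
  shows "(\<Prod>i<N. inverse z * q powi (- (2 * int i + 1))) = inverse z ^ N * q powi (- (int N)\<^sup>2)"
proof (induction N)
  case 0 then show ?case by simp
next
  case (Suc N)
  have "q powi (- (int N)\<^sup>2) * q powi (- (2 * int N + 1)) = q powi (- (int (Suc N))\<^sup>2)"
    by (rule pi_add'[OF assms(2)]) (simp add: power2_eq_square algebra_simps)
  thus ?case using Suc by (simp add: algebra_simps)
qed

lemma finite_jtp:
  fixes q z :: complex
  assumes q: "q \<noteq> 0" and z: "z \<noteq> 0"
  shows "qpoch (- z * q) (q\<^sup>2) N * qpoch (- q / z) (q\<^sup>2) N
       = (\<Sum>k\<le>2 * N. q powi ((int k - int N)\<^sup>2) * z powi (int N - int k) * qbin (q\<^sup>2) (2 * N) k)"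
proof -
  define x where "x = inverse z * q powi (1 - 2 * int N)"
  define f where "f j = 1 + x * (q\<^sup>2) ^ j" for j
  have Qp: "(q\<^sup>2) ^ n = q powi (2 * int n)" for n
  proof -
    have "(q\<^sup>2) ^ n = q ^ (2 * n)" by (simp add: power_mult)
    also have "\<dots> = q powi (int (2 * n))" by (rule power_int_of_nat[symmetric])
    finally show ?thesis by simp
  qed
  have R: "(\<Prod>j<2 * N. f j) = (\<Sum>k\<le>2 * N. q ^ (k * (k - 1)) * qbin (q\<^sup>2) (2 * N) k * x ^ k)"
    unfolding f_def by (rule rothe)
  have split: "(\<Prod>j<2 * N. f j) = (\<Prod>i<N. f (N - Suc i)) * (\<Prod>i<N. f (N + i))"
    using prod_lessThan_add[of f N N] prod.nat_diff_reindex[of f N] by (simp only: mult_2)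
  have f1: "f (N - Suc i) = (inverse z * q powi (- (2 * int i + 1))) * (1 + z * q * (q\<^sup>2) ^ i)" if "i < N" for i
  proof -
    have "x * (q\<^sup>2) ^ (N - Suc i) = inverse z * (q powi (1 - 2 * int N) * q powi (2 * int (N - Suc i)))"
      by (simp add: x_def Qp)
    also have "\<dots> = inverse z * q powi (- (2 * int i + 1))"
      using that q by (simp add: pi_add of_nat_diff algebra_simps)
    finally have e: "x * (q\<^sup>2) ^ (N - Suc i) = inverse z * q powi (- (2 * int i + 1))" .
    have e2: "inverse z * q powi (- (2 * int i + 1)) * (z * q * (q\<^sup>2) ^ i) = 1"
    proof -
      have "q powi (- (2 * int i + 1)) * (q * (q\<^sup>2) ^ i) = q powi (- (2 * int i + 1)) * q powi (2 * int i + 1)"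
        using q by (simp add: Qp power_int_add algebra_simps)
      also have "\<dots> = 1" using q by (simp add: pi_add)
      finally show ?thesis using z by (simp add: field_simps)
    qed
    show ?thesis unfolding f_def e using e2 by (simp add: algebra_simps)
  qed
  have f2: "f (N + i) = 1 + q / z * (q\<^sup>2) ^ i" for i
  proof -
    have a1: "x * (q\<^sup>2) ^ (N + i) = inverse z * (q powi (1 - 2 * int N) * q powi (2 * int (N + i)))"
      by (simp add: x_def Qp)
    have a2: "q powi (1 - 2 * int N) * q powi (2 * int (N + i)) = q powi (1 + 2 * int i)"
      by (rule pi_add'[OF q]) simp
    have a3: "q powi (1 + 2 * int i) = q * q powi (2 * int i)"
      using pi_add[OF q, of 1 "2 * int i"] by simp
    have "x * (q\<^sup>2) ^ (N + i) = inverse z * (q powi (1 - 2 * int N) * q powi (2 * int (N + i)))"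
      by (rule a1)
    also have "\<dots> = inverse z * q powi (1 + 2 * int i)" by (simp only: a2)
    also have "\<dots> = inverse z * (q * q powi (2 * int i))" by (simp only: a3)
    also have "\<dots> = q / z * (q\<^sup>2) ^ i"
      by (simp only: Qp) (simp add: field_simps)
    finally have "x * (q\<^sup>2) ^ (N + i) = q / z * (q\<^sup>2) ^ i" .
    thus ?thesis by (simp only: f_def)
  qed
  have P1: "qpoch (- z * q) (q\<^sup>2) N = (\<Prod>i<N. 1 + z * q * (q\<^sup>2) ^ i)"
    by (simp add: qpoch_def)
  have P2: "qpoch (- q / z) (q\<^sup>2) N = (\<Prod>i<N. 1 + q / z * (q\<^sup>2) ^ i)"
    by (simp add: qpoch_def)
  have "(\<Prod>i<N. f (N - Suc i)) = (\<Prod>i<N. inverse z * q powi (- (2 * int i + 1))) * qpoch (- z * q) (q\<^sup>2) N"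
    unfolding P1 prod.distrib[symmetric] by (rule prod.cong) (auto simp: f1)
  also have "\<dots> = inverse z ^ N * q powi (- (int N)\<^sup>2) * qpoch (- z * q) (q\<^sup>2) N"
    using prod_u[OF z q] by simp
  finally have L: "(\<Prod>j<2 * N. f j) = inverse z ^ N * q powi (- (int N)\<^sup>2) *
                    (qpoch (- z * q) (q\<^sup>2) N * qpoch (- q / z) (q\<^sup>2) N)"
    unfolding split P2 by (simp add: f2 mult.assoc)
  have C: "z ^ N * q powi ((int N)\<^sup>2) * (inverse z ^ N * q powi (- (int N)\<^sup>2)) = 1"
  proof -
    have "z ^ N * inverse z ^ N = 1" using z by (simp add: power_mult_distrib[symmetric])
    moreover have "q powi ((int N)\<^sup>2) * q powi (- (int N)\<^sup>2) = 1" using q by (simp add: pi_add)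
    ultimately show ?thesis by (simp add: algebra_simps)
  qed
  have T: "z ^ N * q powi ((int N)\<^sup>2) * (q ^ (k * (k - 1)) * qbin (q\<^sup>2) (2 * N) k * x ^ k)
         = q powi ((int k - int N)\<^sup>2) * z powi (int N - int k) * qbin (q\<^sup>2) (2 * N) k" for k
  proof -
    have xk: "x ^ k = z powi (- int k) * q powi (int k * (1 - 2 * int N))"
      by (simp add: x_def power_mult_distrib pi_inv power_int_power' mult.commute)
    have e1: "z ^ N * z powi (- int k) = z powi (int N - int k)"
      using pi_add'[OF z, of "int N" "- int k" "int N - int k"] by simp
    have kk: "int (k * (k - 1)) = int k * int k - int k" by (cases k) (auto simp: algebra_simps)
    have e2: "q powi ((int N)\<^sup>2) * q ^ (k * (k - 1)) * q powi (int k * (1 - 2 * int N)) = q powi ((int k - int N)\<^sup>2)"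
    proof -
      have "q powi ((int N)\<^sup>2) * q ^ (k * (k - 1)) * q powi (int k * (1 - 2 * int N))
          = q powi ((int N)\<^sup>2 + int (k * (k - 1)) + int k * (1 - 2 * int N))"
        by (simp only: pi_nat pi_add[OF q])
      also have "(int N)\<^sup>2 + int (k * (k - 1)) + int k * (1 - 2 * int N) = (int k - int N)\<^sup>2"
        unfolding kk by (simp add: power2_eq_square algebra_simps)
      finally show ?thesis .
    qed
    show ?thesis unfolding xk
      using e1 e2 by (simp add: algebra_simps)
  qed
  have "qpoch (- z * q) (q\<^sup>2) N * qpoch (- q / z) (q\<^sup>2) N
      = z ^ N * q powi ((int N)\<^sup>2) * (\<Prod>j<2 * N. f j)"
    unfolding L using C by (simp add: algebra_simps)
  also have "\<dots> = (\<Sum>k\<le>2 * N. q powi ((int k - int N)\<^sup>2) * z powi (int N - int k) * qbin (q\<^sup>2) (2 * N) k)"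
    unfolding R sum_distrib_left by (rule sum.cong[OF refl]) (rule T)
  finally show ?thesis .
qed

lemma summable_geo_sq:
  fixes r s :: real
  assumes r: "0 \<le> r" "r < 1" and s: "0 \<le> s"
  shows "summable (\<lambda>n. s ^ n * r ^ (n * n))"
proof -
  have "(\<lambda>n. s * r ^ n) \<longlonglongrightarrow> s * 0"
    by (intro tendsto_mult tendsto_const LIMSEQ_power_zero) (use r in auto)
  hence "eventually (\<lambda>n. s * r ^ n < 1 / 2) sequentially"
    by (intro order_tendstoD(2)) auto
  then obtain N0 where N0: "\<And>n. n \<ge> N0 \<Longrightarrow> s * r ^ n < 1 / 2"
    unfolding eventually_sequentially by blast
  show ?thesis
  proof (rule summable_comparison_test[OF _ summable_geometric[of "1/2::real"]])
    show "\<exists>N. \<forall>n\<ge>N. norm (s ^ n * r ^ (n * n)) \<le> (1 / 2) ^ n"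
    proof (intro exI allI impI)
      fix n assume "n \<ge> N0"
      have e: "s ^ n * r ^ (n * n) = (s * r ^ n) ^ n"
        by (simp add: power_mult_distrib power_mult)
      have "0 \<le> s * r ^ n" using r s by simp
      hence "(s * r ^ n) ^ n \<le> (1 / 2) ^ n"
        using N0[OF \<open>n \<ge> N0\<close>] by (intro power_mono) auto
      thus "norm (s ^ n * r ^ (n * n)) \<le> (1 / 2) ^ n"
        using r s unfolding e by simp
    qed
  qed simp
qed

lemma qsq: "(q::complex) ^ ((nat \<bar>d\<bar>)\<^sup>2) = q powi (d\<^sup>2)"
proof -
  have "int ((nat \<bar>d\<bar>)\<^sup>2) = d\<^sup>2" by simp
  hence "q powi (d\<^sup>2) = q powi (int ((nat \<bar>d\<bar>)\<^sup>2))" by simp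
  also have "\<dots> = q ^ ((nat \<bar>d\<bar>)\<^sup>2)" by (rule power_int_of_nat)
  finally show ?thesis by simp
qed

lemma tZ_summable:
  fixes q z :: complex
  assumes q: "norm q < 1" and z: "z \<noteq> 0"
  shows "(\<lambda>l::int. norm (z powi l * q ^ ((nat \<bar>l\<bar>)\<^sup>2))) summable_on UNIV"
proof -
  define g where "g l = norm (z powi l * q ^ ((nat \<bar>l\<bar>)\<^sup>2))" for l :: int
  define r where "r = norm q"
  have r: "0 \<le> r" "r < 1" using q by (auto simp: r_def)
  have g1: "(g \<circ> int) n = norm z ^ n * r ^ (n * n)" for n
    by (simp add: g_def r_def norm_mult norm_power power2_eq_square)
  have g2: "(g \<circ> (\<lambda>n. - int (Suc n))) n = (\<lambda>n. inverse (norm z) ^ n * r ^ (n * n)) (Suc n)" for n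
  proof -
    have "norm (z powi (- int (Suc n))) = inverse (norm z) ^ Suc n"
      by (simp add: power_int_minus norm_inverse norm_power norm_mult power_inverse del: of_nat_Suc)
    moreover have "nat \<bar>- int (Suc n)\<bar> = Suc n" by simp
    ultimately show ?thesis
      by (simp add: g_def r_def norm_mult norm_power power2_eq_square del: of_nat_Suc)
  qed
  have A: "g summable_on range int"
  proof -
    have "summable (\<lambda>n. norm ((g \<circ> int) n))"
      unfolding g1 using summable_geo_sq[OF r, of "norm z"] r by (simp add: abs_mult)
    hence "(g \<circ> int) summable_on UNIV" by (rule norm_summable_imp_summable_on)
    thus ?thesis by (subst summable_on_reindex) auto
  qed
  have B: "g summable_on range (\<lambda>n. - int (Suc n))"
  proof -
    have "summable (\<lambda>n. inverse (norm z) ^ n * r ^ (n * n))"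
      using summable_geo_sq[OF r, of "inverse (norm z)"] by simp
    hence "summable (\<lambda>n. (\<lambda>n. inverse (norm z) ^ n * r ^ (n * n)) (Suc n))"
      by (subst summable_Suc_iff)
    hence "summable (\<lambda>n. norm ((g \<circ> (\<lambda>n. - int (Suc n))) n))"
      unfolding g2 using r by (simp add: abs_mult)
    hence "(g \<circ> (\<lambda>n. - int (Suc n))) summable_on UNIV" by (rule norm_summable_imp_summable_on)
    thus ?thesis by (subst summable_on_reindex) (auto simp: inj_on_def)
  qed
  have U: "range int \<union> range (\<lambda>n. - int (Suc n)) = (UNIV :: int set)"
  proof -
    have "l \<in> range int \<union> range (\<lambda>n. - int (Suc n))" for l :: int
    proof (cases "l \<ge> 0")
      case True
      hence "l = int (nat l)" by simp
      thus ?thesis by blast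
    next
      case False
      hence "l = - int (Suc (nat (- l - 1)))" by simp
      thus ?thesis by blast
    qed
    thus ?thesis by blast
  qed
  have "g summable_on (range int \<union> range (\<lambda>n. - int (Suc n)))"
    by (rule summable_on_Un_disjoint[OF A B]) auto
  thus ?thesis unfolding U g_def .
qed

lemma qpoch_tendsto_h:
  assumes "norm b < 1" and h: "\<And>a. eventually (\<lambda>N. a \<le> h N) sequentially"
  shows "(\<lambda>N. qpoch x b (h N)) \<longlonglongrightarrow> qpoch_inf x b"
proof -
  have "filterlim h sequentially sequentially" unfolding filterlim_at_top using h by blast
  from filterlim_compose[OF qpoch_tendsto[OF assms(1)] this] show ?thesis .
qed

lemma jtp:
  fixes q z :: complex
  assumes q: "norm q < 1" and q0: "q \<noteq> 0" and z: "z \<noteq> 0"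
  shows "((\<lambda>l::int. z powi l * q ^ ((nat \<bar>l\<bar>)\<^sup>2)) has_sum
           (qpoch_inf (- z * q) (q\<^sup>2) * qpoch_inf (- q / z) (q\<^sup>2) * qpoch_inf (q\<^sup>2) (q\<^sup>2))) UNIV"
proof -
  define Q where "Q = q\<^sup>2"
  have nQ: "norm Q < 1" using q by (simp add: Q_def norm_power power_less_one_iff)
  define LQ where "LQ = qpoch_inf Q Q"
  have LQ: "LQ \<noteq> 0" unfolding LQ_def by (rule qpoch_inf_nz[OF nQ])
  define PQ where "PQ n = qpoch Q Q n" for n
  have PQnz: "PQ n \<noteq> 0" for n unfolding PQ_def by (rule qpoch_nz[OF nQ])
  define cQ where "cQ = qc Q"
  have cQ: "cQ > 0" by (simp add: cQ_def qc_pos)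
  have PQc: "cQ \<le> norm (PQ n)" for n unfolding PQ_def cQ_def by (rule qpoch_lower'[OF nQ])
  define UQ where "UQ = exp (norm Q / (1 - norm Q))"
  have PQU: "norm (PQ n) \<le> UQ" for n unfolding PQ_def UQ_def by (rule qpoch_upper[OF nQ])
  define t where "t l = z powi l * q ^ ((nat \<bar>l\<bar>)\<^sup>2)" for l :: int
  define S where "S N = {- int N..int N}" for N :: nat
  define tm where "tm N l = t l * qbin Q (2 * N) (nat (int N - l))" for N l
  define X where "X = qpoch_inf (- z * q) Q * qpoch_inf (- q / z) Q"
  define PN where "PN N = qpoch (- z * q) Q N * qpoch (- q / z) Q N" for N
  have fin: "PN N = (\<Sum>l\<in>S N. tm N l)" for N
  proof -
    have "PN N = (\<Sum>k\<le>2 * N. q powi ((int k - int N)\<^sup>2) * z powi (int N - int k) * qbin Q (2 * N) k)"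
      unfolding PN_def Q_def by (rule finite_jtp[OF q0 z])
    also have "\<dots> = (\<Sum>l\<in>S N. tm N l)"
    proof (rule sum.reindex_bij_witness[of _ "\<lambda>l. nat (int N - l)" "\<lambda>k. int N - int k"])
      fix k assume k: "k \<in> {..2 * N}"
      show "nat (int N - (int N - int k)) = k" by simp
      show "int N - int k \<in> S N" using k by (auto simp: S_def)
      have "q ^ ((nat \<bar>int N - int k\<bar>)\<^sup>2) = q powi ((int k - int N)\<^sup>2)"
        by (simp add: qsq power2_commute)
      thus "tm N (int N - int k) = q powi ((int k - int N)\<^sup>2) * z powi (int N - int k) * qbin Q (2 * N) k"
        by (simp add: tm_def t_def)
    next
      fix l assume l: "l \<in> S N"
      show "int N - int (nat (int N - l)) = l" using l by (auto simp: S_def)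
      show "nat (int N - l) \<in> {..2 * N}" using l by (auto simp: S_def)
    qed
    finally show ?thesis .
  qed
  define a where "a k N = (if int_decode k \<in> S N then tm N (int_decode k) else 0)" for k N
  have sums_a: "(\<lambda>k. a k N) sums PN N" for N
  proof -
    define A where "A = int_encode ` S N"
    have A: "k \<in> A \<longleftrightarrow> int_decode k \<in> S N" for k
    proof
      assume "k \<in> A" thus "int_decode k \<in> S N" by (auto simp: A_def)
    next
      assume "int_decode k \<in> S N"
      hence "int_encode (int_decode k) \<in> A" unfolding A_def by (rule imageI)
      thus "k \<in> A" by simp
    qed
    have "(\<lambda>k. if k \<in> A then tm N (int_decode k) else 0) sums (\<Sum>k\<in>A. tm N (int_decode k))"
      by (rule sums_If_finite_set) (simp add: A_def S_def)
    moreover have "(\<Sum>k\<in>A. tm N (int_decode k)) = (\<Sum>l\<in>S N. tm N l)"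
      unfolding A_def by (subst sum.reindex) (auto simp: inj_int_encode)
    ultimately show ?thesis unfolding fin a_def using A by simp
  qed
  define b where "b k = t (int_decode k) / LQ" for k
  have lim: "(\<lambda>N. a k N) \<longlonglongrightarrow> b k" for k
  proof -
    define l where "l = int_decode k"
    have ev: "eventually (\<lambda>N. t l * (PQ (2 * N) / (PQ (nat (int N - l)) * PQ (2 * N - nat (int N - l)))) = a k N) sequentially"
      using eventually_ge_at_top[of "nat \<bar>l\<bar>"]
    proof eventually_elim
      case (elim N)
      hence inS: "l \<in> S N" by (auto simp: S_def)
      have "qbin Q (2 * N) (nat (int N - l)) = PQ (2 * N) / (PQ (nat (int N - l)) * PQ (2 * N - nat (int N - l)))"
        unfolding PQ_def by (rule qbin_eq[OF nQ]) (use elim in auto)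
      thus ?case using inS by (simp add: a_def tm_def l_def)
    qed
    have h1: "eventually (\<lambda>N. c \<le> 2 * N) sequentially" for c
      using eventually_ge_at_top[of c] by eventually_elim auto
    have h2: "eventually (\<lambda>N. c \<le> nat (int N - l)) sequentially" for c
      using eventually_ge_at_top[of "c + nat \<bar>l\<bar>"] by eventually_elim auto
    have h3: "eventually (\<lambda>N. c \<le> 2 * N - nat (int N - l)) sequentially" for c
      using eventually_ge_at_top[of "c + nat \<bar>l\<bar>"] by eventually_elim auto
    have "(\<lambda>N. t l * (PQ (2 * N) / (PQ (nat (int N - l)) * PQ (2 * N - nat (int N - l))))) \<longlonglongrightarrow> t l * (LQ / (LQ * LQ))"
      unfolding PQ_def LQ_def
      by (intro tendsto_intros qpoch_tendsto_h[OF nQ] h1 h2 h3) (use LQ in \<open>simp add: LQ_def\<close>)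
    moreover have "t l * (LQ / (LQ * LQ)) = b k" using LQ by (simp add: b_def l_def)
    ultimately show ?thesis using Lim_transform_eventually[OF _ ev] by simp
  qed
  define M where "M k = norm (t (int_decode k)) * (UQ / (cQ * cQ))" for k
  have bound: "norm (a k N) \<le> M k" for k N
  proof (cases "int_decode k \<in> S N")
    case True
    define l where "l = int_decode k"
    have lN: "nat (int N - l) \<le> 2 * N" using True by (auto simp: S_def l_def)
    have "norm (qbin Q (2 * N) (nat (int N - l))) = norm (PQ (2 * N)) / (norm (PQ (nat (int N - l))) * norm (PQ (2 * N - nat (int N - l))))"
      unfolding PQ_def by (subst qbin_eq[OF nQ lN]) (simp add: norm_divide norm_mult)
    also have "\<dots> \<le> UQ / (cQ * cQ)"
      using PQU PQc cQ by (intro frac_le mult_mono) (auto intro: order.trans[OF _ PQU])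
    finally have "norm (qbin Q (2 * N) (nat (int N - l))) \<le> UQ / (cQ * cQ)" .
    hence "norm (t l) * norm (qbin Q (2 * N) (nat (int N - l))) \<le> norm (t l) * (UQ / (cQ * cQ))"
      by (intro mult_left_mono) auto
    thus ?thesis using True by (simp add: a_def tm_def M_def l_def norm_mult)
  next
    case False
    have "0 \<le> UQ" by (simp add: UQ_def)
    thus ?thesis using False cQ by (simp add: a_def M_def)
  qed
  have sM: "summable M"
  proof -
    have "(\<lambda>l. norm (t l)) summable_on UNIV" unfolding t_def by (rule tZ_summable[OF q z])
    hence "(\<lambda>k. norm (t (int_decode k))) summable_on UNIV"
      using summable_on_reindex_bij_betw[of int_decode UNIV UNIV "\<lambda>l. norm (t l)"] bij_int_decode
      by (simp add: bij_betw_def bij_def)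
    hence "summable (\<lambda>k. norm (t (int_decode k)))" by (rule summable_on_imp_summable)
    thus ?thesis unfolding M_def by (rule summable_mult2)
  qed
  have T: "eventually (\<lambda>n. summable (\<lambda>k. norm (a k n))) sequentially \<and>
           summable (\<lambda>n. norm (b n)) \<and> ((\<lambda>n. suminf (\<lambda>k. a k n)) \<longlonglongrightarrow> suminf b)"
    by (rule tannerys_theorem[OF lim _ sM]) (auto simp: bound intro!: always_eventually)
  have "(\<lambda>N. suminf (\<lambda>k. a k N)) = PN" using sums_a by (auto simp: sums_iff)
  moreover have "PN \<longlonglongrightarrow> X"
    unfolding PN_def X_def by (intro tendsto_intros qpoch_tendsto nQ)
  ultimately have sb: "suminf b = X" using T LIMSEQ_unique by metis
  have sumb: "summable (\<lambda>n. norm (b n))" using T by blast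
  hence "summable b" by (rule summable_norm_cancel)
  hence "(\<lambda>k. LQ * b k) sums (LQ * X)" using sb by (metis summable_sums sums_mult)
  moreover have "(\<lambda>k. LQ * b k) = (\<lambda>k. t (int_decode k))" using LQ by (auto simp: b_def)
  ultimately have S1: "(\<lambda>k. t (int_decode k)) sums (LQ * X)" by simp
  have "summable (\<lambda>k. norm (LQ * b k))"
    using summable_mult[OF sumb, of "norm LQ"] by (simp add: norm_mult)
  hence "summable (\<lambda>k. norm (t (int_decode k)))" using LQ by (simp add: b_def)
  from norm_summable_imp_has_sum[OF this S1]
  have "((\<lambda>k. t (int_decode k)) has_sum (LQ * X)) UNIV" .
  hence "(t has_sum (LQ * X)) UNIV"
    using has_sum_reindex_bij_betw[of int_decode UNIV UNIV t] bij_int_decode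
    by (simp add: bij_betw_def bij_def)
  moreover have "LQ * X = qpoch_inf (- z * q) (q\<^sup>2) * qpoch_inf (- q / z) (q\<^sup>2) * qpoch_inf (q\<^sup>2) (q\<^sup>2)"
    by (simp add: LQ_def X_def Q_def)
  ultimately show ?thesis unfolding t_def by simp
qed

lemma has_sum_prod2:
  fixes f g :: "_ \<Rightarrow> real"
  assumes f: "(f has_sum F) A" and g: "(g has_sum G) B"
    and fn: "\<And>x. x \<in> A \<Longrightarrow> f x \<ge> 0" and gn: "\<And>y. y \<in> B \<Longrightarrow> g y \<ge> 0"
  shows "((\<lambda>(x, y). f x * g y) has_sum (F * G)) (A \<times> B)"
proof -
  have inner: "((\<lambda>y. (\<lambda>(x, y). f x * g y) (x, y)) has_sum f x * G) B" if "x \<in> A" for x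
    using has_sum_cmult_right[OF g, of "f x"] by simp
  have outer: "((\<lambda>x. f x * G) has_sum F * G) A" by (rule has_sum_cmult_left[OF f])
  have summ: "(\<lambda>(x, y). f x * g y) summable_on Sigma A (\<lambda>_. B)"
    by (rule summable_on_SigmaI[OF inner]) (use outer fn gn in \<open>auto simp: summable_on_def\<close>)
  show ?thesis by (rule has_sum_SigmaI[OF inner outer summ])
qed

lemma nonneg_has_sum:
  fixes f :: "nat \<Rightarrow> real"
  assumes "summable f" "\<And>n. f n \<ge> 0"
  shows "(f has_sum suminf f) UNIV"
proof (rule norm_summable_imp_has_sum)
  show "summable (\<lambda>n. norm (f n))" using assms by simp
  show "f sums suminf f" using assms(1) by (rule summable_sums)
qed

lemma Gsum:
  fixes q :: complex
  assumes q: "norm q < 1"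
    and summ: "(\<lambda>(i, m). q ^ (i\<^sup>2 + (m + p)\<^sup>2 + m\<^sup>2 + i * (2 * m + p)) / (qpoch q q i * qpoch q q m * qpoch q q (m + p))) summable_on UNIV"
  shows "((\<lambda>(i, m). q ^ (i\<^sup>2 + (m + p)\<^sup>2 + m\<^sup>2 + i * (2 * m + p)) / (qpoch q q i * qpoch q q m * qpoch q q (m + p))) has_sum (q ^ (p\<^sup>2) / qpoch_inf q q)) UNIV"
proof -
  define G where "G = (\<lambda>(i, m). q ^ (i\<^sup>2 + (m + p)\<^sup>2 + m\<^sup>2 + i * (2 * m + p)) / (qpoch q q i * qpoch q q m * qpoch q q (m + p)))"
  define P where "P n = qpoch q q n" for n
  define \<psi> where "\<psi> = (\<lambda>(s::nat, m::nat). (s - m, m))"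
  have bij: "bij_betw \<psi> (Sigma UNIV (\<lambda>s. {..s})) UNIV"
    by (rule bij_betw_byWitness[where f' = "\<lambda>(i, m). (i + m, m)"]) (auto simp: \<psi>_def)
  have s2: "(\<lambda>x. G (\<psi> x)) summable_on Sigma UNIV (\<lambda>s. {..s})"
    using summable_on_reindex_bij_betw[OF bij, of G] summ by (simp add: G_def)
  hence h2: "((\<lambda>x. G (\<psi> x)) has_sum infsum (\<lambda>x. G (\<psi> x)) (Sigma UNIV (\<lambda>s. {..s}))) (Sigma UNIV (\<lambda>s. {..s}))"
    by (rule has_sum_infsum)
  have inner: "((\<lambda>m. G (\<psi> (s, m))) has_sum (q ^ (p\<^sup>2) * (q ^ (s * (s + p)) / (P s * P (s + p))))) {..s}" for s
  proof -
    have "(\<Sum>m\<le>s. G (\<psi> (s, m))) = (\<Sum>m\<le>s. q ^ (p\<^sup>2) * q ^ (s * (s + p)) * (q ^ (m * (m + p)) / (P (s - m) * P m * P (m + p))))"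
    proof (rule sum.cong[OF refl])
      fix m assume "m \<in> {..s}"
      then obtain i where s: "s = i + m" by (metis atMost_iff le_add_diff_inverse2)
      have e: "(s - m)\<^sup>2 + (m + p)\<^sup>2 + m\<^sup>2 + (s - m) * (2 * m + p) = p\<^sup>2 + s * (s + p) + m * (m + p)"
        unfolding s by (simp add: power2_eq_square algebra_simps)
      have "G (\<psi> (s, m)) = q ^ ((s - m)\<^sup>2 + (m + p)\<^sup>2 + m\<^sup>2 + (s - m) * (2 * m + p)) / (P (s - m) * P m * P (m + p))"
        by (simp add: G_def \<psi>_def P_def)
      also have "\<dots> = q ^ (p\<^sup>2 + s * (s + p) + m * (m + p)) / (P (s - m) * P m * P (m + p))"
        by (simp only: e)
      also have "\<dots> = q ^ (p\<^sup>2) * q ^ (s * (s + p)) * (q ^ (m * (m + p)) / (P (s - m) * P m * P (m + p)))"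
        by (simp add: power_add)
      finally show "G (\<psi> (s, m)) = q ^ (p\<^sup>2) * q ^ (s * (s + p)) * (q ^ (m * (m + p)) / (P (s - m) * P m * P (m + p)))" .
    qed
    also have "\<dots> = q ^ (p\<^sup>2) * q ^ (s * (s + p)) * (\<Sum>m\<le>s. q ^ (m * (m + p)) / (P (s - m) * P m * P (m + p)))"
      by (simp add: sum_distrib_left)
    also have "\<dots> = q ^ (p\<^sup>2) * (q ^ (s * (s + p)) / (P s * P (s + p)))"
      using identA[OF q, where s = s and p = p] by (simp add: P_def)
    finally show ?thesis by (metis has_sum_finite finite_atMost)
  qed
  have A: "((\<lambda>s. q ^ (p\<^sup>2) * (q ^ (s * (s + p)) / (P s * P (s + p)))) has_sum infsum (\<lambda>x. G (\<psi> x)) (Sigma UNIV (\<lambda>s. {..s}))) UNIV"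
    by (rule has_sum_SigmaD[OF h2 inner])
  have B: "((\<lambda>s. q ^ (p\<^sup>2) * (q ^ (s * (s + p)) / (P s * P (s + p)))) has_sum (q ^ (p\<^sup>2) * (1 / qpoch_inf q q))) UNIV"
    unfolding P_def by (rule has_sum_cmult_right[OF durfee[OF q]])
  have "infsum (\<lambda>x. G (\<psi> x)) (Sigma UNIV (\<lambda>s. {..s})) = q ^ (p\<^sup>2) * (1 / qpoch_inf q q)"
    using has_sum_unique[OF A B] .
  with h2 have "((\<lambda>x. G (\<psi> x)) has_sum (q ^ (p\<^sup>2) * (1 / qpoch_inf q q))) (Sigma UNIV (\<lambda>s. {..s}))" by simp
  hence "(G has_sum (q ^ (p\<^sup>2) * (1 / qpoch_inf q q))) UNIV"
    using has_sum_reindex_bij_betw[OF bij, of G] by simp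
  thus ?thesis unfolding G_def by simp
qed

theorem corollary4p8:
  fixes q a :: complex
  assumes "norm q < 1" and "a \<noteq> 0"
  shows "((\<lambda>(i, j, k). q ^ (i\<^sup>2 + j\<^sup>2 + k\<^sup>2 + i * (j + k))
            / (qpoch q q i * qpoch q q j * qpoch q q k) * a powi (int j - int k))
          has_sum
          (qpoch_inf (- a * q) (q\<^sup>2) * qpoch_inf (- q / a) (q\<^sup>2) * qpoch_inf (q\<^sup>2) (q\<^sup>2)
            / qpoch_inf q q)) (UNIV :: (nat \<times> nat \<times> nat) set)"
proof (cases "q = 0")
  case True
  define f where "f = (\<lambda>(i, j, k). q ^ (i\<^sup>2 + j\<^sup>2 + k\<^sup>2 + i * (j + k))
            / (qpoch q q i * qpoch q q j * qpoch q q k) * a powi (int j - int k))"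
  have P1: "qpoch q q n = 1" for n using True by (simp add: qpoch_def)
  have f0: "f x = 0" if "x \<noteq> (0, 0, 0)" for x
  proof -
    obtain i j k where x: "x = (i, j, k)" by (cases x) auto
    have "i\<^sup>2 + j\<^sup>2 + k\<^sup>2 + i * (j + k) \<noteq> 0" using that x by auto
    thus ?thesis using True by (simp add: f_def x)
  qed
  have f00: "f (0, 0, 0) = 1" by (simp add: f_def P1)
  have "(f has_sum 1) UNIV"
    by (rule has_sum_finite_neutralI[where B = "{(0, 0, 0)}"]) (auto simp: f0 f00)
  moreover have "qpoch_inf (- a * q) (q\<^sup>2) * qpoch_inf (- q / a) (q\<^sup>2) * qpoch_inf (q\<^sup>2) (q\<^sup>2)
            / qpoch_inf q q = 1"
    using True by (simp add: qpoch_inf_def)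
  ultimately show ?thesis unfolding f_def by simp
next
  case False
  have q: "norm q < 1" and a0: "a \<noteq> 0" using assms by auto
  define f where "f = (\<lambda>(i::nat, j::nat, k::nat). q ^ (i\<^sup>2 + j\<^sup>2 + k\<^sup>2 + i * (j + k))
            / (qpoch q q i * qpoch q q j * qpoch q q k) * a powi (int j - int k))"
  define L where "L = qpoch_inf q q"
  define J where "J = qpoch_inf (- a * q) (q\<^sup>2) * qpoch_inf (- q / a) (q\<^sup>2) * qpoch_inf (q\<^sup>2) (q\<^sup>2)"
  define c where "c = qc q"
  define r where "r = norm q"
  have r: "0 \<le> r" "r < 1" using q by (auto simp: r_def)
  have c: "c > 0" by (simp add: c_def qc_pos)
  have Pc: "c \<le> norm (qpoch q q n)" for n unfolding c_def by (rule qpoch_lower'[OF q])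
  define f1 where "f1 i = r ^ (i * i)" for i :: nat
  define f2 where "f2 j = norm a ^ j * r ^ (j * j)" for j :: nat
  define f3 where "f3 k = inverse (norm a) ^ k * r ^ (k * k)" for k :: nat
  define B where "B = (\<lambda>(i::nat, j::nat, k::nat). (1 / c ^ 3) * (f1 i * (f2 j * f3 k)))"
  have Bsum: "B summable_on UNIV"
  proof -
    have h1: "(f1 has_sum suminf f1) UNIV"
      by (rule nonneg_has_sum) (use summable_pow_sq[OF r] r in \<open>auto simp: f1_def[abs_def]\<close>)
    have h2: "(f2 has_sum suminf f2) UNIV"
      by (rule nonneg_has_sum) (use summable_geo_sq[OF r, of "norm a"] r in \<open>auto simp: f2_def[abs_def]\<close>)
    have h3: "(f3 has_sum suminf f3) UNIV"
      by (rule nonneg_has_sum) (use summable_geo_sq[OF r, of "inverse (norm a)"] r in \<open>auto simp: f3_def[abs_def]\<close>)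
    have h23: "((\<lambda>(j, k). f2 j * f3 k) has_sum (suminf f2 * suminf f3)) (UNIV \<times> UNIV)"
      by (rule has_sum_prod2[OF h2 h3]) (use r in \<open>auto simp: f2_def f3_def\<close>)
    have h123: "((\<lambda>(i, y). f1 i * (\<lambda>(j, k). f2 j * f3 k) y) has_sum (suminf f1 * (suminf f2 * suminf f3))) (UNIV \<times> (UNIV \<times> UNIV))"
      by (rule has_sum_prod2[OF h1 h23]) (use r in \<open>auto simp: f1_def f2_def f3_def\<close>)
    have "(\<lambda>(i, y). f1 i * (\<lambda>(j, k). f2 j * f3 k) y) = (\<lambda>(i, j, k). f1 i * (f2 j * f3 k))"
      by (auto simp: fun_eq_iff)
    hence "(\<lambda>(i, j, k). f1 i * (f2 j * f3 k)) summable_on UNIV"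
      using h123 by (auto simp: summable_on_def)
    hence "(\<lambda>x. (1 / c ^ 3) * (\<lambda>(i, j, k). f1 i * (f2 j * f3 k)) x) summable_on UNIV"
      by (rule summable_on_cmult_right)
    moreover have "(\<lambda>x. (1 / c ^ 3) * (\<lambda>(i, j, k). f1 i * (f2 j * f3 k)) x) = B"
      by (auto simp: fun_eq_iff B_def)
    ultimately show ?thesis by simp
  qed
  have bound: "norm (f x) \<le> B x" for x
  proof -
    obtain i j k where x: "x = (i, j, k)" by (cases x) auto
    have apow: "a powi (int j - int k) = a ^ j * inverse a ^ k"
      using pi_add'[OF a0, of "int j" "- int k" "int j - int k"] by (simp add: pi_inv)
    define e where "e = i\<^sup>2 + j\<^sup>2 + k\<^sup>2 + i * (j + k)"
    define E where "E = i * i + j * j + k * k"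
    define D where "D = norm (qpoch q q i) * norm (qpoch q q j) * norm (qpoch q q k)"
    define A where "A = norm a ^ j * inverse (norm a) ^ k"
    have A0: "0 \<le> A" by (simp add: A_def)
    have nf: "norm (f x) = r ^ e / D * A"
      by (simp add: f_def x apow e_def D_def A_def r_def norm_mult norm_divide norm_power norm_inverse)
    have "c * c * c \<le> D" unfolding D_def using Pc c by (intro mult_mono) (auto intro: order.trans[OF _ Pc])
    hence cD: "c ^ 3 \<le> D" by (simp add: power3_eq_cube)
    have eE: "r ^ e \<le> r ^ E"
      using r by (intro power_decreasing) (auto simp: e_def E_def power2_eq_square)
    have "r ^ e / D \<le> r ^ E / c ^ 3"
      using r c cD eE by (intro frac_le) auto
    hence "r ^ e / D * A \<le> r ^ E / c ^ 3 * A" using A0 by (rule mult_right_mono)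
    also have "r ^ E / c ^ 3 * A = B x"
      by (simp add: B_def x f1_def f2_def f3_def E_def A_def power_add algebra_simps)
    finally show ?thesis unfolding nf .
  qed
  have fsum: "f summable_on UNIV"
  proof -
    have "(\<lambda>x. norm (f x)) summable_on UNIV"
      by (rule Infinite_Sum.abs_summable_on_comparison_test'[OF Bsum bound])
    thus ?thesis by (simp add: summable_on_iff_abs_summable_on_complex)
  qed
  define \<phi> where "\<phi> = (\<lambda>(n::int, i::nat, m::nat). (i, m + nat n, m + nat (- n)))"
  have bij: "bij_betw \<phi> UNIV UNIV"
  proof (rule bij_betw_byWitness[where f' = "\<lambda>(i, j, k). (int j - int k, i, min j k)"])
    show "\<forall>x\<in>UNIV. (\<lambda>(i, j, k). (int j - int k, i, min j k)) (\<phi> x) = x"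
      by (auto simp: \<phi>_def)
    show "\<forall>x\<in>UNIV. \<phi> ((\<lambda>(i, j, k). (int j - int k, i, min j k)) x) = x"
      by (auto simp: \<phi>_def min_def)
  qed auto
  have hs: "((\<lambda>x. f (\<phi> x)) has_sum infsum f UNIV) (UNIV \<times> UNIV)"
    using has_sum_reindex_bij_betw[OF bij, of f] fsum by (simp add: has_sum_infsum)
  have sl: "((\<lambda>y. f (\<phi> (n, y))) has_sum (a powi n * (q ^ ((nat \<bar>n\<bar>)\<^sup>2) / L))) UNIV" for n
  proof -
    define p where "p = nat \<bar>n\<bar>"
    define G where "G = (\<lambda>(i, m). q ^ (i\<^sup>2 + (m + p)\<^sup>2 + m\<^sup>2 + i * (2 * m + p)) / (qpoch q q i * qpoch q q m * qpoch q q (m + p)))"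
    have fG: "f (\<phi> (n, y)) = a powi n * G y" for y
    proof -
      obtain i m where y: "y = (i, m)" by (cases y) auto
      have raw: "f (\<phi> (n, y)) = q ^ (i\<^sup>2 + (m + nat n)\<^sup>2 + (m + nat (- n))\<^sup>2 + i * ((m + nat n) + (m + nat (- n))))
          / (qpoch q q i * qpoch q q (m + nat n) * qpoch q q (m + nat (- n))) * a powi (int (m + nat n) - int (m + nat (- n)))"
        by (simp only: f_def \<phi>_def y prod.case)
      have Gy: "G y = q ^ (i\<^sup>2 + (m + p)\<^sup>2 + m\<^sup>2 + i * (2 * m + p)) / (qpoch q q i * qpoch q q m * qpoch q q (m + p))"
        by (simp only: G_def y prod.case)
      show ?thesis
      proof (cases "n \<ge> 0")
        case True
        hence 1: "nat n = p" "nat (- n) = 0" "int (m + p) - int m = n" by (auto simp: p_def)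
        have ex: "i\<^sup>2 + (m + p)\<^sup>2 + m\<^sup>2 + i * ((m + p) + m) = i\<^sup>2 + (m + p)\<^sup>2 + m\<^sup>2 + i * (2 * m + p)"
          by (simp add: power2_eq_square algebra_simps)
        have "f (\<phi> (n, y)) = q ^ (i\<^sup>2 + (m + p)\<^sup>2 + m\<^sup>2 + i * (2 * m + p))
          / (qpoch q q i * qpoch q q (m + p) * qpoch q q m) * a powi n"
          by (simp only: raw 1 add_0_right ex)
        thus ?thesis unfolding Gy by (simp add: mult.commute mult.left_commute)
      next
        case False
        hence 1: "nat n = 0" "nat (- n) = p" "int m - int (m + p) = n" by (auto simp: p_def)
        have ex: "i\<^sup>2 + m\<^sup>2 + (m + p)\<^sup>2 + i * (m + (m + p)) = i\<^sup>2 + (m + p)\<^sup>2 + m\<^sup>2 + i * (2 * m + p)"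
          by (simp add: power2_eq_square algebra_simps)
        have "f (\<phi> (n, y)) = q ^ (i\<^sup>2 + (m + p)\<^sup>2 + m\<^sup>2 + i * (2 * m + p))
          / (qpoch q q i * qpoch q q m * qpoch q q (m + p)) * a powi n"
          by (simp only: raw 1 add_0_right ex)
        thus ?thesis unfolding Gy by (simp add: mult.commute mult.left_commute)
      qed
    qed
    have eta: "(\<lambda>(x, y). f (\<phi> (x, y))) = (\<lambda>x. f (\<phi> x))" by (auto simp: fun_eq_iff)
    have "(\<lambda>(x, y). f (\<phi> (x, y))) summable_on Sigma UNIV (\<lambda>_. UNIV)"
      unfolding eta using hs by (auto simp: summable_on_def)
    from summable_on_SigmaD1[OF this, of n]
    have "(\<lambda>y. f (\<phi> (n, y))) summable_on UNIV" by simp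
    hence "(\<lambda>y. inverse (a powi n) * f (\<phi> (n, y))) summable_on UNIV"
      by (rule summable_on_cmult_right)
    moreover have "(\<lambda>y. inverse (a powi n) * f (\<phi> (n, y))) = G"
      using a0 by (auto simp: fun_eq_iff fG)
    ultimately have "G summable_on UNIV" by simp
    hence "(G has_sum (q ^ (p\<^sup>2) / L)) UNIV"
      unfolding G_def L_def by (rule Gsum[OF q])
    hence "((\<lambda>y. a powi n * G y) has_sum (a powi n * (q ^ (p\<^sup>2) / L))) UNIV"
      by (rule has_sum_cmult_right)
    thus ?thesis by (simp add: fG p_def)
  qed
  have S1: "((\<lambda>n. a powi n * (q ^ ((nat \<bar>n\<bar>)\<^sup>2) / L)) has_sum infsum f UNIV) UNIV"
  proof (rule has_sum_SigmaD)
    show "((\<lambda>x. f (\<phi> x)) has_sum infsum f UNIV) (Sigma UNIV (\<lambda>_. UNIV))" using hs by simp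
    show "((\<lambda>y. f (\<phi> (n, y))) has_sum (a powi n * (q ^ ((nat \<bar>n\<bar>)\<^sup>2) / L))) UNIV" for n
      by (rule sl)
  qed
  have "((\<lambda>n. a powi n * q ^ ((nat \<bar>n\<bar>)\<^sup>2) / L) has_sum (J / L)) UNIV"
    unfolding J_def by (rule has_sum_divide_const[OF jtp[OF q False a0]])
  hence S2: "((\<lambda>n. a powi n * (q ^ ((nat \<bar>n\<bar>)\<^sup>2) / L)) has_sum (J / L)) UNIV"
    by simp
  have "infsum f UNIV = J / L" using has_sum_unique[OF S1 S2] .
  hence "(f has_sum (J / L)) UNIV" using fsum by (metis has_sum_infsum)
  thus ?thesis unfolding f_def J_def L_def .
qed


end
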